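(* Let $\alpha>0$ and $n\ge1$. Let $R^*$ have the distribution of $R$, independent of $X^{(n)}$, and define $$D^{(\alpha)}_{\mathsf{out},n}=\sum_{(\xi,r)\in X^{(n)}}|\xi|^\alpha 1_{B^{\mathbb{T}_n}_{R^*}(o)}(\xi),\qquad D^{(\alpha)}_{\mathsf{in},n}=\sum_{(\xi,r)\in X^{(n)}}|\xi|^\alpha 1_{B^{\mathbb{T}_n}_{r}(o)}(\xi),$$ with $|\xi|={\rm d}_{\mathbb{T}_n}(\xi,o)$. Then $\mathbb{E}D^{(\alpha)}_{\mathsf{out},n}=\mathbb{E}D^{(\alpha)}_{\mathsf{in},n}$.
   Context: Fix an integer $d\ge2$. $\mathbb{T}_n$ is the torus obtained from $[-n/2,n/2]^d$ by identifying opposite faces, with toroidal distance ${\rm d}_{\mathbb{T}_n}$ and $B^{\mathbb{T}_n}_r(\xi)=\{\eta\in\mathbb{T}_n:{\rm d}_{\mathbb{T}_n}(\xi,\eta)\le r\}$. $R$ is a nonnegative random variable with absolutely continuous distribution such that $\lim_{h\to\infty}h^s\mathbb{P}(R>h)=\beta$ for some $\beta,s\in(0,\infty)$. $X^{(n)}$ is a homogeneous Poisson point process of intensity $1$ on $\mathbb{T}_n$, each point independently marked with a mark in $[0,\infty)$ distributed as $R$ (points written $(\xi,r)$). *)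

theory Defs
  imports "HOL-Probability.Probability"
begin

text \<open>The torus T_n: the box [-n/2,n/2)^d (one representative per point), with
  the toroidal distance; o is the origin 0.\<close>

definition torus_box :: "nat \<Rightarrow> (real^'d) set" where
  "torus_box n = {x. \<forall>i. - real n / 2 \<le> x$i \<and> x$i < real n / 2}"

definition torus_dist :: "nat \<Rightarrow> real^'d \<Rightarrow> real^'d \<Rightarrow> real" where
  "torus_dist n x y =
     sqrt (\<Sum>i\<in>UNIV. (INF k::int. \<bar>x$i - y$i - real_of_int k * real n\<bar>)\<^sup>2)"

definition torus_ball :: "nat \<Rightarrow> real \<Rightarrow> real^'d \<Rightarrow> (real^'d) set" where
  "torus_ball n r \<xi> = {\<eta> \<in> torus_box n. torus_dist n \<xi> \<eta> \<le> r}"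

definition marked_point_law :: "nat \<Rightarrow> real measure \<Rightarrow> ((real^'d) \<times> real) measure" where
  "marked_point_law n mu = uniform_measure lborel (torus_box n) \<Otimes>\<^sub>M mu"

text \<open>Law of the independently marked homogeneous Poisson process of intensity 1 on T_n
  (volume n^d): a Poisson(n^d) number N of points, the points being the first N of an
  i.i.d. sequence of marked points. A configuration (N, X) has points X 0, ..., X (N-1).\<close>
definition marked_PPP :: "nat \<Rightarrow> real measure \<Rightarrow> (nat \<times> (nat \<Rightarrow> (real^'d) \<times> real)) measure" where
  "marked_PPP n mu =
     measure_pmf (poisson_pmf (real n ^ CARD('d))) \<Otimes>\<^sub>M
     (\<Pi>\<^sub>M i\<in>(UNIV::nat set). marked_point_law n mu)"

definition D_out :: "nat \<Rightarrow> real \<Rightarrow> (nat \<times> (nat \<Rightarrow> (real^'d) \<times> real)) \<Rightarrow> real \<Rightarrow> real" where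
  "D_out n \<alpha> \<omega> Rstar = (\<Sum>i<fst \<omega>. let \<xi> = fst (snd \<omega> i) in
      torus_dist n \<xi> 0 powr \<alpha> * indicator (torus_ball n Rstar 0) \<xi>)"

definition D_in :: "nat \<Rightarrow> real \<Rightarrow> (nat \<times> (nat \<Rightarrow> (real^'d) \<times> real)) \<Rightarrow> real" where
  "D_in n \<alpha> \<omega> = (\<Sum>i<fst \<omega>. let \<xi> = fst (snd \<omega> i); r = snd (snd \<omega> i) in
      torus_dist n \<xi> 0 powr \<alpha> * indicator (torus_ball n r 0) \<xi>)"

end

theory Submission
  imports Defs
begin

lemma inf_eq: "(INF k::int. \<bar>t - real_of_int k * real n\<bar>) = infdist t (range (\<lambda>k::int. real_of_int k * real n))"
  by (simp add: infdist_def image_comp dist_real_def o_def)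

lemma torus_dist_eq: "torus_dist n x y = sqrt (\<Sum>i\<in>UNIV. (infdist (x$i - y$i) (range (\<lambda>k::int. real_of_int k * real n)))\<^sup>2)"
  unfolding torus_dist_def inf_eq ..

lemma torus_dist_cont: "continuous_on UNIV (\<lambda>p::(real^'d) \<times> (real^'d). torus_dist n (fst p) (snd p))"
  unfolding torus_dist_eq
  by (intro continuous_intros continuous_on_infdist)

lemma torus_dist_meas2: "(\<lambda>p::(real^'d) \<times> (real^'d). torus_dist n (fst p) (snd p)) \<in> borel_measurable borel"
  by (rule borel_measurable_continuous_onI[OF torus_dist_cont])

lemma torus_dist_meas[measurable (raw)]:
  assumes "f \<in> M \<rightarrow>\<^sub>M borel" "g \<in> M \<rightarrow>\<^sub>M borel"
  shows "(\<lambda>x. torus_dist n (f x) (g x)) \<in> borel_measurable M"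
proof -
  have "(\<lambda>x. (f x, g x)) \<in> M \<rightarrow>\<^sub>M borel"
    using assms by measurable
  from measurable_compose[OF this torus_dist_meas2] show ?thesis by simp
qed

lemma torus_box_pred[measurable (raw)]:
  assumes [measurable]: "f \<in> M \<rightarrow>\<^sub>M (borel :: (real^'d) measure)"
  shows "Measurable.pred M (\<lambda>x. f x \<in> torus_box n)"
  unfolding torus_box_def mem_Collect_eq by measurable

lemma torus_box_sets: "torus_box n \<in> sets (borel :: (real^'d) measure)"
proof -
  have "Measurable.pred borel (\<lambda>x::real^'d. x \<in> torus_box n)"
    by measurable
  then show ?thesis by (simp add: pred_def)
qed

lemma box_measure:
  assumes "n \<ge> 1"
  shows "emeasure lborel (torus_box n :: (real^'d) set) \<noteq> 0"
    "emeasure lborel (torus_box n :: (real^'d) set) \<noteq> \<infinity>"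
proof -
  define l :: "real^'d" where "l = (\<chi> i. - real n / 2)"
  define u :: "real^'d" where "u = (\<chi> i. real n / 2)"
  have sb: "torus_box n \<in> sets (lborel :: (real^'d) measure)" using torus_box_sets by simp
  have s1: "box l u \<subseteq> torus_box n" by (auto simp: mem_box_cart l_def u_def torus_box_def less_imp_le)
  have s2: "torus_box n \<subseteq> cbox l u" by (auto simp: mem_box_cart l_def u_def torus_box_def less_imp_le)
  have "emeasure lborel (torus_box n :: (real^'d) set) \<le> emeasure lborel (cbox l u)"
    by (rule emeasure_mono[OF s2]) simp
  also have "\<dots> < \<infinity>" by (rule emeasure_bounded_finite) simp
  finally show "emeasure lborel (torus_box n :: (real^'d) set) \<noteq> \<infinity>" by simp
  have pos: "b \<in> Basis \<Longrightarrow> (u - l) \<bullet> b > 0" for b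
    using assms by (auto simp: Basis_vec_def inner_axis l_def u_def)
  have "0 < emeasure lborel (box l u)"
    using pos by (subst emeasure_lborel_box) (auto intro!: prod_pos less_imp_le simp: inner_diff_left)
  also have "\<dots> \<le> emeasure lborel (torus_box n :: (real^'d) set)" by (rule emeasure_mono[OF s1 sb])
  finally show "emeasure lborel (torus_box n :: (real^'d) set) \<noteq> 0" by simp
qed

definition G :: "nat \<Rightarrow> real \<Rightarrow> real^'d \<Rightarrow> real \<Rightarrow> real" where
  "G n \<alpha> \<xi> r = torus_dist n \<xi> 0 powr \<alpha> * indicator (torus_ball n r 0) \<xi>"

lemma G_nonneg: "0 \<le> G n \<alpha> \<xi> r"
  by (simp add: G_def)

lemma G_meas: "(\<lambda>p. ennreal (G n \<alpha> (fst p) (snd p))) \<in> borel_measurable (borel \<Otimes>\<^sub>M (borel :: real measure) :: ((real^'d) \<times> real) measure)"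
proof -
  have eq: "G n \<alpha> \<xi> r = (if \<xi> \<in> torus_box n \<and> torus_dist n 0 \<xi> \<le> r then torus_dist n \<xi> 0 powr \<alpha> else 0)" for \<xi> :: "real^'d" and r
    by (simp add: G_def torus_ball_def indicator_def)
  show ?thesis unfolding eq by measurable
qed


lemma count_sum:
  fixes q :: "nat pmf" and P :: "'a measure" and \<phi> :: "'a \<Rightarrow> ennreal"
  assumes PP: "prob_space P" and \<phi>[measurable]: "\<phi> \<in> borel_measurable P"
  shows "(\<integral>\<^sup>+\<omega>. (\<Sum>i<fst \<omega>. \<phi> (snd \<omega> i)) \<partial>(measure_pmf q \<Otimes>\<^sub>M (\<Pi>\<^sub>M i\<in>(UNIV::nat set). P)))
     = (\<integral>\<^sup>+N. of_nat N * (\<integral>\<^sup>+x. \<phi> x \<partial>P) \<partial>measure_pmf q)"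
proof -
  interpret PP: product_prob_space "\<lambda>_. P" UNIV
    by (intro product_prob_space.intro product_prob_space_axioms.intro product_sigma_finite.intro prob_space_imp_sigma_finite PP)
  have piP: "prob_space (\<Pi>\<^sub>M i\<in>(UNIV::nat set). P)" by (rule prob_space_PiM) (simp add: PP)
  interpret pair_prob_space "measure_pmf q" "\<Pi>\<^sub>M i\<in>(UNIV::nat set). P"
    by (intro pair_prob_space.intro pair_sigma_finite.intro prob_space_imp_sigma_finite
        prob_space_measure_pmf piP)
  have m: "(\<lambda>\<omega>. \<Sum>i<fst \<omega>. \<phi> (snd \<omega> i)) \<in> borel_measurable (measure_pmf q \<Otimes>\<^sub>M (\<Pi>\<^sub>M i\<in>(UNIV::nat set). P))"
  proof (rule measurable_compose_countable[where f="\<lambda>k \<omega>. \<Sum>i<k. \<phi> (snd \<omega> i)" and g=fst])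
    fix k
    have c: "(\<lambda>\<omega>. snd \<omega> i) \<in> measurable (measure_pmf q \<Otimes>\<^sub>M (\<Pi>\<^sub>M i\<in>(UNIV::nat set). P)) P" for i
      by (rule measurable_compose[OF measurable_snd measurable_component_singleton]) simp
    show "(\<lambda>\<omega>. \<Sum>i<k. \<phi> (snd \<omega> i)) \<in> borel_measurable (measure_pmf q \<Otimes>\<^sub>M (\<Pi>\<^sub>M i\<in>(UNIV::nat set). P))"
      by (intro borel_measurable_sum measurable_compose[OF c \<phi>])
  next
    have "fst \<in> measurable (measure_pmf q \<Otimes>\<^sub>M (\<Pi>\<^sub>M i\<in>(UNIV::nat set). P)) (measure_pmf q)"
      by (rule measurable_fst)
    then show "fst \<in> measurable (measure_pmf q \<Otimes>\<^sub>M (\<Pi>\<^sub>M i\<in>(UNIV::nat set). P)) (count_space UNIV)"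
      by (simp add: measurable_cong_sets[OF refl sets_measure_pmf_count_space])
  qed
  have cX: "(\<lambda>X. \<phi> (X i)) \<in> borel_measurable (\<Pi>\<^sub>M i\<in>(UNIV::nat set). P)" for i
    by (rule measurable_compose[OF measurable_component_singleton[of i UNIV "\<lambda>_. P", OF UNIV_I] \<phi>])
  have comp: "(\<integral>\<^sup>+X. \<phi> (X i) \<partial>(\<Pi>\<^sub>M i\<in>(UNIV::nat set). P)) = (\<integral>\<^sup>+x. \<phi> x \<partial>P)" for i
  proof -
    have "(\<integral>\<^sup>+x. \<phi> x \<partial>P) = (\<integral>\<^sup>+x. \<phi> x \<partial>distr (\<Pi>\<^sub>M i\<in>(UNIV::nat set). P) P (\<lambda>X. X i))"
      using PP.PiM_component[of i] by simp
    also have "\<dots> = (\<integral>\<^sup>+X. \<phi> (X i) \<partial>(\<Pi>\<^sub>M i\<in>(UNIV::nat set). P))"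
      by (rule nn_integral_distr) (simp_all add: measurable_component_singleton)
    finally show ?thesis ..
  qed
  have "(\<integral>\<^sup>+\<omega>. (\<Sum>i<fst \<omega>. \<phi> (snd \<omega> i)) \<partial>(measure_pmf q \<Otimes>\<^sub>M (\<Pi>\<^sub>M i\<in>(UNIV::nat set). P)))
     = (\<integral>\<^sup>+N. \<integral>\<^sup>+X. (\<Sum>i<N. \<phi> (X i)) \<partial>(\<Pi>\<^sub>M i\<in>(UNIV::nat set). P) \<partial>measure_pmf q)"
    using sigma_finite_measure.nn_integral_fst[OF prob_space_imp_sigma_finite[OF piP] m] by simp
  also have "\<dots> = (\<integral>\<^sup>+N. (\<Sum>i<N. \<integral>\<^sup>+X. \<phi> (X i) \<partial>(\<Pi>\<^sub>M i\<in>(UNIV::nat set). P)) \<partial>measure_pmf q)"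
    by (intro nn_integral_cong nn_integral_sum cX)
  also have "\<dots> = (\<integral>\<^sup>+N. of_nat N * (\<integral>\<^sup>+x. \<phi> x \<partial>P) \<partial>measure_pmf q)"
    by (simp add: comp)
  finally show ?thesis .
qed


theorem proposition3p1:
  fixes mu :: "real measure" and \<alpha> \<beta> s :: real and n :: nat
  assumes d2: "CARD('d::finite) \<ge> 2"
    and R_prob: "prob_space mu" and R_sets: "sets mu = sets borel"
    and R_nonneg: "emeasure mu {..<0} = 0"
    and R_ac: "absolutely_continuous lborel mu"
    and \<beta>_pos: "\<beta> > 0" and s_pos: "s > 0"
    and R_tail: "((\<lambda>h. h powr s * measure mu {h<..}) \<longlongrightarrow> \<beta>) at_top"
    and \<alpha>_pos: "\<alpha> > 0" and n_pos: "n \<ge> 1"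
  shows "(\<integral>\<^sup>+ z. ennreal (D_out n \<alpha> (fst z) (snd z))
            \<partial>(marked_PPP n mu \<Otimes>\<^sub>M mu :: ((nat \<times> (nat \<Rightarrow> (real^'d) \<times> real)) \<times> real) measure))
       = (\<integral>\<^sup>+ \<omega>. ennreal (D_in n \<alpha> \<omega>) \<partial>(marked_PPP n mu :: (nat \<times> (nat \<Rightarrow> (real^'d) \<times> real)) measure))"
proof -
  interpret mu: prob_space mu by (rule R_prob)
  define U :: "(real^'d) measure" where "U = uniform_measure lborel (torus_box n)"
  have Uprob: "prob_space U"
    unfolding U_def using box_measure[OF n_pos] by (intro prob_space_uniform_measure) auto
  have sU: "sets U = sets borel" by (simp add: U_def)
  have spU: "space U = UNIV" by (simp add: U_def)
  define P where "P = U \<Otimes>\<^sub>M mu"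
  have Plaw: "marked_point_law n mu = P" by (simp add: P_def U_def marked_point_law_def)
  have Pprob: "prob_space P"
    unfolding P_def
    by (intro prob_space_pair Uprob R_prob)
  define g :: "(real^'d) \<times> real \<Rightarrow> ennreal" where "g p = ennreal (G n \<alpha> (fst p) (snd p))" for p
  have sP: "sets P = sets (borel \<Otimes>\<^sub>M (borel :: real measure) :: ((real^'d) \<times> real) measure)"
    unfolding P_def by (rule sets_pair_measure_cong[OF sU R_sets])
  have gm: "g \<in> borel_measurable P"
    unfolding g_def measurable_cong_sets[OF sP refl] by (rule G_meas)
  define h where "h \<xi> = (\<integral>\<^sup>+r. g (\<xi>, r) \<partial>mu)" for \<xi>
  have hm: "h \<in> borel_measurable U"
    unfolding h_def using gm unfolding P_def
    by (intro mu.borel_measurable_nn_integral) (simp add: case_prod_beta')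
  have hfm: "(\<lambda>x. h (fst x)) \<in> borel_measurable P"
    unfolding P_def by (rule measurable_compose[OF measurable_fst hm])
  have key: "(\<integral>\<^sup>+x. h (fst x) \<partial>P) = (\<integral>\<^sup>+x. g x \<partial>P)"
  proof -
    have "(\<integral>\<^sup>+x. g x \<partial>P) = (\<integral>\<^sup>+\<xi>. h \<xi> \<partial>U)"
      using mu.nn_integral_fst[OF gm[unfolded P_def]] by (simp add: h_def P_def)
    moreover have "(\<integral>\<^sup>+x. h (fst x) \<partial>P) = (\<integral>\<^sup>+\<xi>. h \<xi> \<partial>U)"
      using mu.nn_integral_fst[OF hfm[unfolded P_def]] by (simp add: P_def mu.emeasure_space_1)
    ultimately show ?thesis by simp
  qed
  define q where "q = poisson_pmf (real n ^ CARD('d))"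
  define M where "M = measure_pmf q \<Otimes>\<^sub>M (\<Pi>\<^sub>M i\<in>(UNIV::nat set). P)"
  have PPP: "marked_PPP n mu = M" by (simp add: marked_PPP_def M_def q_def Plaw)
  have inneq: "ennreal (D_in n \<alpha> \<omega>) = (\<Sum>i<fst \<omega>. g (snd \<omega> i))" for \<omega>
    unfolding D_in_def Let_def G_def[symmetric] g_def
    by (rule sum_ennreal[symmetric]) (rule G_nonneg)
  have outeq: "ennreal (D_out n \<alpha> \<omega> r) = (\<Sum>i<fst \<omega>. g (fst (snd \<omega> i), r))" for \<omega> r
    unfolding D_out_def Let_def G_def[symmetric] g_def fst_conv snd_conv
    by (rule sum_ennreal[symmetric]) (rule G_nonneg)
  have RHS: "(\<integral>\<^sup>+ \<omega>. ennreal (D_in n \<alpha> \<omega>) \<partial>M) = (\<integral>\<^sup>+N. of_nat N * (\<integral>\<^sup>+x. g x \<partial>P) \<partial>measure_pmf q)"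
    unfolding inneq M_def by (rule count_sum[OF Pprob gm])
  have Mprob: "prob_space M"
    unfolding M_def
    by (intro prob_space_pair prob_space_measure_pmf prob_space_PiM Pprob)
  have outm: "(\<lambda>z. \<Sum>i<fst (fst z). g (fst (snd (fst z) i), snd z)) \<in> borel_measurable (M \<Otimes>\<^sub>M mu)"
  proof (rule measurable_compose_countable[where f="\<lambda>k z. \<Sum>i<k. g (fst (snd (fst z) i), snd z)" and g="\<lambda>z. fst (fst z)"])
    fix k
    have c: "(\<lambda>z. (fst (snd (fst z) i), snd z)) \<in> measurable (M \<Otimes>\<^sub>M mu) P" for i
    proof -
      have a: "(\<lambda>z. snd (fst z) i) \<in> measurable (M \<Otimes>\<^sub>M mu) P"
        unfolding M_def
        by (rule measurable_compose[OF measurable_compose[OF measurable_fst measurable_snd]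
              measurable_component_singleton]) simp
      show ?thesis unfolding P_def
        by (rule measurable_Pair[OF measurable_compose[OF a[unfolded P_def] measurable_fst] measurable_snd])
    qed
    show "(\<lambda>z. \<Sum>i<k. g (fst (snd (fst z) i), snd z)) \<in> borel_measurable (M \<Otimes>\<^sub>M mu)"
      by (intro borel_measurable_sum measurable_compose[OF c gm])
  next
    have "(\<lambda>z. fst (fst z)) \<in> measurable (M \<Otimes>\<^sub>M mu) (measure_pmf q)"
      unfolding M_def by (rule measurable_compose[OF measurable_fst measurable_fst])
    then show "(\<lambda>z. fst (fst z)) \<in> measurable (M \<Otimes>\<^sub>M mu) (count_space UNIV)"
      by (simp add: measurable_cong_sets[OF refl sets_measure_pmf_count_space])
  qed
  have gr: "(\<lambda>r. g (\<xi>, r)) \<in> borel_measurable mu" for \<xi>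
    by (rule measurable_Pair2[OF gm[unfolded P_def]]) (simp add: spU)
  have "(\<integral>\<^sup>+ z. ennreal (D_out n \<alpha> (fst z) (snd z)) \<partial>(M \<Otimes>\<^sub>M mu))
      = (\<integral>\<^sup>+ z. (\<Sum>i<fst (fst z). g (fst (snd (fst z) i), snd z)) \<partial>(M \<Otimes>\<^sub>M mu))"
    by (simp add: outeq)
  also have "\<dots> = (\<integral>\<^sup>+\<omega>. \<integral>\<^sup>+r. (\<Sum>i<fst \<omega>. g (fst (snd \<omega> i), r)) \<partial>mu \<partial>M)"
    using mu.nn_integral_fst[OF outm] by simp
  also have "\<dots> = (\<integral>\<^sup>+\<omega>. (\<Sum>i<fst \<omega>. h (fst (snd \<omega> i))) \<partial>M)"
    by (intro nn_integral_cong) (simp add: h_def nn_integral_sum gr)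
  also have "\<dots> = (\<integral>\<^sup>+N. of_nat N * (\<integral>\<^sup>+x. h (fst x) \<partial>P) \<partial>measure_pmf q)"
    unfolding M_def by (rule count_sum[OF Pprob hfm])
  also have "\<dots> = (\<integral>\<^sup>+ \<omega>. ennreal (D_in n \<alpha> \<omega>) \<partial>M)"
    by (simp add: RHS key)
  finally show ?thesis by (simp add: PPP)
qed

end
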